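(* Let $m,n$ be integers with $|m|=|n|\ge2$. Then $\mathrm{BS}(m,n)$ has no primitive transitive action of infinite phenotype.
   Context: $\mathrm{BS}(m,n)=\langle b,t\mid tb^mt^{-1}=b^n\rangle$; right actions. A transitive action with point stabilizer $\Lambda$ has infinite phenotype iff $[\langle b\rangle:\langle b\rangle\cap\Lambda]=\infty$, i.e. iff $b$ acts freely (all $b$-orbits are infinite). An action is primitive if it preserves no equivalence relation other than equality and the full relation. *)

theory Defs
  imports Main
begin

text \<open>An action of BS(m,n) = < b, t | t b^m t^-1 = b^n > on a (nonempty) type 'a is given
by the permutations beta (action of b) and tau (action of t).  We use right actions:
x.b = beta x, x.t = tau x, so x.(g h) = (x.g).h.\<close>

definition zpow :: "('a \<Rightarrow> 'a) \<Rightarrow> int \<Rightarrow> 'a \<Rightarrow> 'a" where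
  "zpow f k = (if 0 \<le> k then f ^^ nat k else (inv f) ^^ nat (- k))"

text \<open>beta, tau define a right action of BS(m,n): bijections with x.(t b^m t^-1) = x.b^n.\<close>
definition BS_action :: "int \<Rightarrow> int \<Rightarrow> ('a \<Rightarrow> 'a) \<Rightarrow> ('a \<Rightarrow> 'a) \<Rightarrow> bool" where
  "BS_action m n beta tau \<longleftrightarrow> bij beta \<and> bij tau \<and>
     (\<forall>x. inv tau (zpow beta m (tau x)) = zpow beta n x)"

definition gen_rel :: "('a \<Rightarrow> 'a) \<Rightarrow> ('a \<Rightarrow> 'a) \<Rightarrow> ('a \<times> 'a) set" where
  "gen_rel beta tau = {(x, beta x) | x. True} \<union> {(x, inv beta x) | x. True}
                    \<union> {(x, tau x) | x. True} \<union> {(x, inv tau x) | x. True}"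

definition transitive_action :: "('a \<Rightarrow> 'a) \<Rightarrow> ('a \<Rightarrow> 'a) \<Rightarrow> bool" where
  "transitive_action beta tau \<longleftrightarrow> (\<forall>x y. (x, y) \<in> (gen_rel beta tau)\<^sup>*)"

definition invariant_rel :: "('a \<Rightarrow> 'a) \<Rightarrow> ('a \<Rightarrow> 'a) \<Rightarrow> ('a \<times> 'a) set \<Rightarrow> bool" where
  "invariant_rel beta tau R \<longleftrightarrow>
     (\<forall>x y. (x, y) \<in> R \<longrightarrow> (beta x, beta y) \<in> R \<and> (inv beta x, inv beta y) \<in> R
                          \<and> (tau x, tau y) \<in> R \<and> (inv tau x, inv tau y) \<in> R)"

definition primitive_action :: "('a \<Rightarrow> 'a) \<Rightarrow> ('a \<Rightarrow> 'a) \<Rightarrow> bool" where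
  "primitive_action beta tau \<longleftrightarrow>
     (\<forall>R. equiv UNIV R \<and> invariant_rel beta tau R \<longrightarrow> R = Id \<or> R = UNIV)"

definition infinite_phenotype :: "('a \<Rightarrow> 'a) \<Rightarrow> bool" where
  "infinite_phenotype beta \<longleftrightarrow> (\<forall>x. infinite (range (\<lambda>k. zpow beta k x)))"

end

theory Submission
  imports Defs
begin

lemma zpow_0[simp]: "zpow f 0 = id"
  by (simp add: zpow_def)

lemma zpow_succ:
  assumes "bij f" shows "zpow f (a + 1) = f \<circ> zpow f a"
proof (cases "0 \<le> a")
  case True
  then have "nat (a+1) = Suc (nat a)" by simp
  then show ?thesis using True by (simp add: zpow_def)
next
  case False
  then obtain k where k: "a = - int (Suc k)" 
  proof -
    have "a = - int (Suc (nat (- a - 1)))" using False by simp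
    then show ?thesis using that by blast
  qed
  have fi: "f \<circ> inv f = id" using assms bij_is_surj surj_iff by blast
  show ?thesis
  proof (cases k)
    case 0
    then show ?thesis using k fi by (simp add: zpow_def)
  next
    case (Suc k')
    have e1: "nat (- a) = Suc k" using k by simp
    have "a + 1 = - int k" using k by simp
    then have "nat (- (a+1)) = k" "\<not> 0 \<le> a + 1" using Suc by simp_all
    then have "zpow f (a+1) = inv f ^^ k" using Suc by (simp add: zpow_def)
    moreover have "zpow f a = inv f \<circ> (inv f ^^ k)" using False e1
      by (simp add: zpow_def)
    ultimately show ?thesis using fi by (metis comp_assoc id_comp)
  qed
qed

lemma zpow_pred:
  assumes "bij f" shows "zpow f (a - 1) = inv f \<circ> zpow f a"
proof -
  have "zpow f a = f \<circ> zpow f (a - 1)" using zpow_succ[OF assms, of "a-1"] by simp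
  moreover have "inv f \<circ> f = id" using assms bij_is_inj inj_iff by blast
  ultimately show ?thesis by (metis comp_assoc id_comp)
qed

lemma zpow_add:
  assumes "bij f" shows "zpow f (a + b) = zpow f b \<circ> zpow f a"
proof (induction b rule: int_induct[where k=0])
  case base then show ?case by simp
next
  case (step1 i)
  have "zpow f (a + (i+1)) = f \<circ> zpow f (a + i)" using zpow_succ[OF assms, of "a+i"] by (simp add: add.assoc)
  then show ?case using step1 zpow_succ[OF assms, of i] by (simp add: comp_assoc)
next
  case (step2 i)
  have "zpow f (a + (i-1)) = inv f \<circ> zpow f (a + i)" using zpow_pred[OF assms, of "a+i"] by (simp add: algebra_simps)
  then show ?case using step2 zpow_pred[OF assms, of i] by (simp add: comp_assoc)
qed

lemma zpow_add_pt:
  assumes "bij f" shows "zpow f (a + b) x = zpow f b (zpow f a x)"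
  using zpow_add[OF assms] by simp

lemma zpow_1: "zpow f 1 = f" by (simp add: zpow_def)
lemma zpow_m1: "zpow f (-1) = inv f" by (simp add: zpow_def)

lemma zpow_inj:
  assumes "bij f" "zpow f d x = zpow f d y" shows "x = y"
proof -
  have "zpow f (d + (-d)) x = zpow f (d + (-d)) y"
    using assms(2) zpow_add_pt[OF assms(1), of d "-d"] by metis
  then show ?thesis by (simp only: add.right_inverse zpow_0 id_apply)
qed

lemma zpow_period:
  assumes "bij f" "zpow f k x = x" shows "zpow f (k*q) x = x"
proof (induction q rule: int_induct[where k=0])
  case base then show ?case by simp
next
  case (step1 i)
  have "zpow f (k*i + k) x = zpow f k (zpow f (k*i) x)" using zpow_add_pt[OF assms(1)] by blast
  then show ?case using step1 assms by (simp add: algebra_simps)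
next
  case (step2 i)
  have "zpow f (k*(i-1) + k) x = zpow f k (zpow f (k*(i-1)) x)" using zpow_add_pt[OF assms(1)] by blast
  then have "zpow f k (zpow f (k*(i-1)) x) = zpow f k x" using step2 assms by (simp add: algebra_simps)
  then show ?case using zpow_inj[OF assms(1)] assms by metis
qed

lemma free_lemma:
  assumes "bij f" "zpow f k x = x" "k \<noteq> 0"
  shows "finite (range (\<lambda>j. zpow f j x))"
proof -
  have "range (\<lambda>j. zpow f j x) \<subseteq> (\<lambda>j. zpow f j x) ` {-\<bar>k\<bar>..\<bar>k\<bar>}"
  proof
    fix y assume "y \<in> range (\<lambda>j. zpow f j x)"
    then obtain j where y: "y = zpow f j x" by auto
    have "j = k * (j div k) + j mod k" by simp
    then have "zpow f j x = zpow f (j mod k) (zpow f (k * (j div k)) x)"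
      by (metis zpow_add_pt[OF assms(1)])
    also have "\<dots> = zpow f (j mod k) x" using zpow_period[OF assms(1,2)] by simp
    finally have "y = zpow f (j mod k) x" using y by simp
    moreover have "j mod k \<in> {-\<bar>k\<bar>..\<bar>k\<bar>}" using assms(3)
      by (cases "k > 0") (auto simp: abs_if pos_mod_bound neg_mod_bound pos_mod_sign neg_mod_sign less_imp_le
         intro: order_trans[of _ 0] order.trans[of _ 0])
    ultimately show "y \<in> (\<lambda>j. zpow f j x) ` {-\<bar>k\<bar>..\<bar>k\<bar>}" by blast
  qed
  then show ?thesis by (rule finite_subset) simp
qed

lemma conj_mult:
  assumes "bij f" "bij g" "\<And>x. g (zpow f c x) = zpow f d (g x)"
  shows "g (zpow f (c*j) x) = zpow f (d*j) (g x)"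
proof (induction j arbitrary: x rule: int_induct[where k=0])
  case base then show ?case by simp
next
  case (step1 i)
  have "g (zpow f (c*i + c) x) = g (zpow f c (zpow f (c*i) x))" using zpow_add_pt[OF assms(1)] by metis
  also have "\<dots> = zpow f d (zpow f (d*i) (g x))" using assms(3) step1 by simp
  also have "\<dots> = zpow f (d*i + d) (g x)" using zpow_add_pt[OF assms(1)] by metis
  finally show ?case by (simp add: algebra_simps)
next
  case (step2 i)
  have "zpow f d (g (zpow f (c*(i-1)) x)) = g (zpow f c (zpow f (c*(i-1)) x))" using assms(3) by simp
  also have "\<dots> = g (zpow f (c*(i-1) + c) x)" using zpow_add_pt[OF assms(1)] by metis
  also have "\<dots> = zpow f (d*i) (g x)" using step2 by (simp add: algebra_simps)
  also have "\<dots> = zpow f (d*(i-1) + d) (g x)" by (simp add: algebra_simps)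
  also have "\<dots> = zpow f d (zpow f (d*(i-1)) (g x))" using zpow_add_pt[OF assms(1)] by metis
  finally show ?case using zpow_inj[OF assms(1)] by metis
qed

theorem mainTheorem16:
  fixes m n :: int and beta tau :: "'a \<Rightarrow> 'a"
  assumes "\<bar>m\<bar> = \<bar>n\<bar>" and "\<bar>m\<bar> \<ge> 2"
  shows "\<not> (BS_action m n beta tau \<and> transitive_action beta tau \<and>
             primitive_action beta tau \<and> infinite_phenotype beta)"
proof
  assume H: "BS_action m n beta tau \<and> transitive_action beta tau \<and>
             primitive_action beta tau \<and> infinite_phenotype beta"
  have bb: "bij beta" and bt: "bij tau" using H by (auto simp: BS_action_def)
  have rel0: "\<And>x. inv tau (zpow beta m (tau x)) = zpow beta n x" using H by (auto simp: BS_action_def)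
  have rel: "\<And>x. tau (zpow beta n x) = zpow beta m (tau x)"
    by (metis rel0 bt bij_inv_eq_iff)
  obtain e :: int where e: "n = m * e" "e * e = 1"
    using assms(1) proof (cases "n = m")
    case True then show ?thesis using that[of 1] by simp
  next
    case False then have "n = m * (-1)" using assms(1) by (auto simp: abs_if split: if_splits)
    then show ?thesis using that[of "-1"] by simp
  qed
  have relj: "\<And>j x. tau (zpow beta (n*j) x) = zpow beta (m*j) (tau x)"
    using conj_mult[OF bb bt rel] by blast
  have mje: "\<And>j. m * j = n * (e * j)" using e by (simp add: algebra_simps)
  define R where "R = {(x,y). \<exists>j. y = zpow beta (m*j) x}"
  have r1: "\<And>x. (x,x) \<in> R" unfolding R_def by (auto intro: exI[of _ 0])
  have r2: "\<And>x y. (x,y) \<in> R \<Longrightarrow> (y,x) \<in> R"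
  proof -
    fix x y assume "(x,y) \<in> R"
    then obtain j where "y = zpow beta (m*j) x" by (auto simp: R_def)
    then have "zpow beta (m*(-j)) y = zpow beta (m*j + m*(-j)) x" using zpow_add_pt[OF bb] by metis
    then have "x = zpow beta (m*(-j)) y" by simp
    then show "(y,x) \<in> R" unfolding R_def by blast
  qed
  have r3: "\<And>x y z. (x,y) \<in> R \<Longrightarrow> (y,z) \<in> R \<Longrightarrow> (x,z) \<in> R"
  proof -
    fix x y z assume "(x,y) \<in> R" "(y,z) \<in> R"
    then obtain j i where "y = zpow beta (m*j) x" "z = zpow beta (m*i) y" by (auto simp: R_def)
    then have "z = zpow beta (m*j + m*i) x" using zpow_add_pt[OF bb] by metis
    then show "(x,z) \<in> R" by (auto simp: R_def distrib_left[symmetric])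
  qed
  have eqv: "equiv UNIV R"
    by (rule equivI) (auto intro: refl_onI symI transI r1 r2 r3)
  have comm: "\<And>a c x. zpow beta a (zpow beta c x) = zpow beta c (zpow beta a x)"
    using zpow_add_pt[OF bb] by (metis add.commute)
  have inv: "invariant_rel beta tau R"
    unfolding invariant_rel_def
  proof (intro allI impI conjI)
    fix x y assume "(x,y) \<in> R"
    then obtain j where y: "y = zpow beta (m*j) x" by (auto simp: R_def)
    show "(beta x, beta y) \<in> R" using y comm[of 1] by (auto simp: R_def zpow_1)
    show "(inv beta x, inv beta y) \<in> R" using y comm[of "-1"] by (auto simp: R_def zpow_m1)
    have "tau y = zpow beta (m*(e*j)) (tau x)" using y relj[of "e*j" x] mje[of j] by simp
    then show "(tau x, tau y) \<in> R" by (auto simp: R_def)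
    have "tau (zpow beta (n*j) (inv tau x)) = y" using relj[of j "inv tau x"] y bt
      by (simp add: bij_is_surj surj_f_inv_f)
    then have "inv tau y = zpow beta (m*(e*j)) (inv tau x)" using bt e
      by (metis bij_inv_eq_iff mje mult.assoc mult.commute mult.left_neutral)
    then show "(inv tau x, inv tau y) \<in> R" by (auto simp: R_def)
  qed
  have m0: "m \<noteq> 0" using assms(2) by auto
  have "R = Id \<or> R = UNIV" using H eqv inv by (auto simp: primitive_action_def)
  then show False
  proof
    assume "R = Id"
    have "(undefined, zpow beta (m*1) undefined) \<in> R" unfolding R_def by blast
    then have "(undefined, zpow beta (m*1) undefined) \<in> Id" using \<open>R = Id\<close> by simp
    then have "zpow beta m undefined = undefined" by simp
    then show False using free_lemma[OF bb _ m0] H by (auto simp: infinite_phenotype_def)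
  next
    assume "R = UNIV"
    then have "(undefined, beta undefined) \<in> R" by simp
    then obtain j where j: "beta undefined = zpow beta (m*j) undefined" by (auto simp: R_def)
    have "zpow beta (m*j - 1) undefined = zpow beta (-1) (zpow beta (m*j) undefined)"
      using zpow_add_pt[OF bb, of "m*j" "-1"] by simp
    also have "\<dots> = undefined" using j bb by (metis zpow_m1 bij_is_inj inv_f_f)
    finally have fx: "zpow beta (m*j - 1) undefined = undefined" .
    have "m*j \<noteq> 1"
    proof
      assume "m*j = 1"
      then have "m dvd 1" by (metis dvd_triv_left)
      then have "\<bar>m\<bar> = 1" by simp
      then show False using assms(2) by simp
    qed
    then have "m*j - 1 \<noteq> 0" by simp
    then show False using free_lemma[OF bb fx] H by (auto simp: infinite_phenotype_def)
  qed
qed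

end
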